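(* Consider the stock-market Hamiltonian $$H=H_0+\lambda H_I,$$ $$H_0=\omega_a\,\hat n+\omega_c\,\hat k+\omega_p\,\hat P+\sum_{k\in\Lambda}\big(\Omega_A(k)\,\hat N_k+\Omega_C(k)\,\hat K_k+\Omega_O(k)\,\hat O_k\big),$$ $$H_I=\big(z^\dagger Z(f)+z\,Z^\dagger(\overline f)\big)+\big(p^\dagger o(g)+p\,o^\dagger(\overline g)\big),$$ with all symbols as defined in the context. Then the operators $$\hat N:=\hat n+\sum_{k\in\Lambda}\hat N_k,\qquad \hat K:=\hat k+\sum_{k\in\Lambda}\hat K_k,\qquad \hat\Gamma:=\hat P+\sum_{k\in\Lambda}\hat O_k$$ are constants of motion, i.e. $[H,\hat N]=[H,\hat K]=[H,\hat\Gamma]=0$.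
   Context: Let $\Lambda\subset\mathbb N$ be a finite index set (labelling the traders other than a fixed trader $\tau$). Consider bosonic annihilation operators $a,c,p$ and $A_k,C_k,o_k$ ($k\in\Lambda$) on a Fock space with vacuum $\varphi_0$ (annihilated by all of them), satisfying $[a,a^\dagger]=[c,c^\dagger]=[p,p^\dagger]=\mathbb 1$, $[A_i,A_j^\dagger]=[C_i,C_j^\dagger]=[o_i,o_j^\dagger]=\delta_{ij}\mathbb 1$, with all other commutators between these operators and their adjoints equal to zero. The Fock space is the closure of the span of the orthonormal number vectors obtained by applying normalized powers of the creation operators to $\varphi_0$. Set $\hat n=a^\dagger a$, $\hat k=c^\dagger c$, $\hat P=p^\dagger p$, $\hat N_k=A_k^\dagger A_k$, $\hat K_k=C_k^\dagger C_k$, $\hat O_k=o_k^\dagger o_k$. For a bosonic mode $c$ (resp. $C_k$), the operators $c^{\hat P}$ and $(c^\dagger)^{\hat P}$ are defined on number vectors $\varphi$ in which the $c$-mode has occupation $k$ and the $p$-mode has occupation $m$ by: $c^{\hat P}\varphi=\varphi$ if $m=0$; $c^{\hat P}\varphi=0$ if $m>k$; $c^{\hat P}\varphi=\sqrt{k(k-1)\cdots(k-m+1)}\,\varphi'$ if $k\ge m>0$, where $\varphi'$ is the same number vector with $c$-occupation $k-m$; and $(c^\dagger)^{\hat P}\varphi=\varphi$ if $m=0$, $(c^\dagger)^{\hat P}\varphi=\sqrt{(k+1)(k+2)\cdots(k+m)}\,\varphi''$ if $m>0$, where $\varphi''$ has $c$-occupation $k+m$ (all other occupations unchanged). Define $z=a\,(c^\dagger)^{\hat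 P}$, $Z_k=A_k\,(C_k^\dagger)^{\hat P}$, and smeared fields $Z(f)=\sum_{k\in\Lambda}f(k)Z_k$, $Z^\dagger(\overline f)=\sum_{k\in\Lambda}\overline{f(k)}Z_k^\dagger=\sum_{k\in\Lambda}\overline{f(k)}A_k^\dagger C_k^{\hat P}$, $o(g)=\sum_{k\in\Lambda}g(k)o_k$, $o^\dagger(\overline g)=\sum_{k\in\Lambda}\overline{g(k)}o_k^\dagger$, where $f,g:\Lambda\to\mathbb C$. Here $\lambda,\omega_a,\omega_c,\omega_p>0$ are real constants and $\Omega_A,\Omega_C,\Omega_O:\Lambda\to[0,\infty)$ are real functions. Commutators are understood formally (e.g. on finite linear combinations of number vectors). *)

theory Defs
  imports Complex_Main
begin

datatype mode = Ma | Mc | Mp | MA nat | MC nat | Mo nat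

text \<open>A number vector is determined by its occupation numbers.  A (formal) vector is
  given by its coefficients with respect to the orthonormal number basis.\<close>
type_synonym occ = "mode \<Rightarrow> nat"
type_synonym vec = "occ \<Rightarrow> complex"

text \<open>Occupation functions labelling number vectors of the Fock space for the index set L:
  modes with a label outside L do not exist, i.e. are never occupied.\<close>
definition valid_occ :: "nat set \<Rightarrow> occ \<Rightarrow> bool" where
  "valid_occ L n \<longleftrightarrow> (\<forall>k. k \<notin> L \<longrightarrow> n (MA k) = 0 \<and> n (MC k) = 0 \<and> n (Mo k) = 0)"

definition fin_comb :: "nat set \<Rightarrow> vec \<Rightarrow> bool" where
  "fin_comb L \<psi> \<longleftrightarrow> finite {n. \<psi> n \<noteq> 0} \<and> (\<forall>n. \<psi> n \<noteq> 0 \<longrightarrow> valid_occ L n)"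

text \<open>Annihilation operator of mode m (linear extension of
  a e_n = sqrt(n_m) e_{n - 1_m}), written in coefficient form.\<close>
definition ann :: "mode \<Rightarrow> vec \<Rightarrow> vec" where
  "ann m \<psi> = (\<lambda>n. complex_of_real (sqrt (real (Suc (n m)))) * \<psi> (n(m := Suc (n m))))"

text \<open>Creation operator of mode m (linear extension of a^dag e_n = sqrt(n_m+1) e_{n + 1_m}).\<close>
definition cre :: "mode \<Rightarrow> vec \<Rightarrow> vec" where
  "cre m \<psi> = (\<lambda>n. if n m = 0 then 0
                   else complex_of_real (sqrt (real (n m))) * \<psi> (n(m := n m - 1)))"

definition num :: "mode \<Rightarrow> vec \<Rightarrow> vec" where
  "num m = cre m \<circ> ann m"

text \<open>c^P: on a number vector with c-occupation k and p-occupation m it gives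
  sqrt(k(k-1)...(k-m+1)) times the vector with c-occupation k-m (identity if m = 0,
  zero if m > k).  Coefficient form of its linear extension.\<close>
definition powP_ann :: "mode \<Rightarrow> vec \<Rightarrow> vec" where
  "powP_ann c \<psi> = (\<lambda>n. let m = n Mp; k = n c + m in
       complex_of_real (sqrt (\<Prod>i<m. real (k - i))) * \<psi> (n(c := k)))"

text \<open>(c^dag)^P: on a number vector with c-occupation k and p-occupation m it gives
  sqrt((k+1)...(k+m)) times the vector with c-occupation k+m.\<close>
definition powP_cre :: "mode \<Rightarrow> vec \<Rightarrow> vec" where
  "powP_cre c \<psi> = (\<lambda>n. let m = n Mp in
       if m \<le> n c then complex_of_real (sqrt (\<Prod>i\<in>{1..m}. real (n c - m + i))) * \<psi> (n(c := n c - m))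
       else 0)"

definition z_op :: "vec \<Rightarrow> vec" where "z_op = ann Ma \<circ> powP_cre Mc"
definition zd_op :: "vec \<Rightarrow> vec" where "zd_op = powP_ann Mc \<circ> cre Ma"
definition Z_op :: "nat \<Rightarrow> vec \<Rightarrow> vec" where "Z_op k = ann (MA k) \<circ> powP_cre (MC k)"
definition Zd_op :: "nat \<Rightarrow> vec \<Rightarrow> vec" where "Zd_op k = cre (MA k) \<circ> powP_ann (MC k)"

definition Zf :: "nat set \<Rightarrow> (nat \<Rightarrow> complex) \<Rightarrow> vec \<Rightarrow> vec" where
  "Zf L f \<psi> = (\<lambda>n. \<Sum>k\<in>L. f k * Z_op k \<psi> n)"
definition Zdf :: "nat set \<Rightarrow> (nat \<Rightarrow> complex) \<Rightarrow> vec \<Rightarrow> vec" where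
  "Zdf L f \<psi> = (\<lambda>n. \<Sum>k\<in>L. cnj (f k) * Zd_op k \<psi> n)"
definition of_op :: "nat set \<Rightarrow> (nat \<Rightarrow> complex) \<Rightarrow> vec \<Rightarrow> vec" where
  "of_op L g \<psi> = (\<lambda>n. \<Sum>k\<in>L. g k * ann (Mo k) \<psi> n)"
definition odf_op :: "nat set \<Rightarrow> (nat \<Rightarrow> complex) \<Rightarrow> vec \<Rightarrow> vec" where
  "odf_op L g \<psi> = (\<lambda>n. \<Sum>k\<in>L. cnj (g k) * cre (Mo k) \<psi> n)"

definition H0 :: "nat set \<Rightarrow> real \<Rightarrow> real \<Rightarrow> real \<Rightarrow> (nat \<Rightarrow> real) \<Rightarrow> (nat \<Rightarrow> real)
                   \<Rightarrow> (nat \<Rightarrow> real) \<Rightarrow> vec \<Rightarrow> vec" where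
  "H0 L wa wc wp WA WC WO \<psi> = (\<lambda>n.
      of_real wa * num Ma \<psi> n + of_real wc * num Mc \<psi> n + of_real wp * num Mp \<psi> n
      + (\<Sum>k\<in>L. of_real (WA k) * num (MA k) \<psi> n + of_real (WC k) * num (MC k) \<psi> n
                 + of_real (WO k) * num (Mo k) \<psi> n))"

definition HI :: "nat set \<Rightarrow> (nat \<Rightarrow> complex) \<Rightarrow> (nat \<Rightarrow> complex) \<Rightarrow> vec \<Rightarrow> vec" where
  "HI L f g \<psi> = (\<lambda>n. (zd_op (Zf L f \<psi>) n + z_op (Zdf L f \<psi>) n)
                    + (cre Mp (of_op L g \<psi>) n + ann Mp (odf_op L g \<psi>) n))"

definition Ham :: "nat set \<Rightarrow> (nat \<Rightarrow> complex) \<Rightarrow> (nat \<Rightarrow> complex) \<Rightarrow> real \<Rightarrow> real \<Rightarrow> real \<Rightarrow> real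
                   \<Rightarrow> (nat \<Rightarrow> real) \<Rightarrow> (nat \<Rightarrow> real) \<Rightarrow> (nat \<Rightarrow> real) \<Rightarrow> vec \<Rightarrow> vec" where
  "Ham L f g lam wa wc wp WA WC WO \<psi> =
     (\<lambda>n. H0 L wa wc wp WA WC WO \<psi> n + of_real lam * HI L f g \<psi> n)"

definition Ntot :: "nat set \<Rightarrow> vec \<Rightarrow> vec" where
  "Ntot L \<psi> = (\<lambda>n. num Ma \<psi> n + (\<Sum>k\<in>L. num (MA k) \<psi> n))"
definition Ktot :: "nat set \<Rightarrow> vec \<Rightarrow> vec" where
  "Ktot L \<psi> = (\<lambda>n. num Mc \<psi> n + (\<Sum>k\<in>L. num (MC k) \<psi> n))"
definition Gtot :: "nat set \<Rightarrow> vec \<Rightarrow> vec" where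
  "Gtot L \<psi> = (\<lambda>n. num Mp \<psi> n + (\<Sum>k\<in>L. num (Mo k) \<psi> n))"

definition comm :: "(vec \<Rightarrow> vec) \<Rightarrow> (vec \<Rightarrow> vec) \<Rightarrow> vec \<Rightarrow> vec" where
  "comm A B \<psi> = (\<lambda>n. A (B \<psi>) n - B (A \<psi>) n)"

end

theory Submission
  imports Defs
begin

definition maps :: "(vec \<Rightarrow> vec) \<Rightarrow> (occ \<Rightarrow> complex) \<Rightarrow> (occ \<Rightarrow> complex) \<Rightarrow> bool" where
  "maps T w w' \<longleftrightarrow> (\<forall>\<psi>. T (\<lambda>n. w n * \<psi> n) = (\<lambda>n. w' n * T \<psi> n))"

lemma maps_ann: "(\<And>n. w' n = w (n(m := Suc (n m)))) \<Longrightarrow> maps (ann m) w w'"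
  by (auto simp: maps_def ann_def fun_eq_iff)

lemma maps_cre: "(\<And>n. n m \<noteq> 0 \<Longrightarrow> w' n = w (n(m := n m - 1))) \<Longrightarrow> maps (cre m) w w'"
  by (auto simp: maps_def cre_def fun_eq_iff)

lemma maps_pann: "(\<And>n. w' n = w (n(c := n c + n Mp))) \<Longrightarrow> maps (powP_ann c) w w'"
  by (auto simp: maps_def powP_ann_def fun_eq_iff Let_def)

lemma maps_pcre: "(\<And>n. n Mp \<le> n c \<Longrightarrow> w' n = w (n(c := n c - n Mp))) \<Longrightarrow> maps (powP_cre c) w w'"
  by (auto simp: maps_def powP_cre_def fun_eq_iff Let_def)

lemma maps_comp: "maps A wm w2 \<Longrightarrow> maps B w0 wm \<Longrightarrow> maps (A \<circ> B) w0 w2"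
  by (simp add: maps_def)

lemma maps_Zf: "(\<And>k. k \<in> L \<Longrightarrow> maps (Z_op k) w w') \<Longrightarrow> maps (Zf L f) w w'"
  by (auto simp: maps_def Zf_def fun_eq_iff sum_distrib_left intro!: sum.cong)

lemma maps_Zdf: "(\<And>k. k \<in> L \<Longrightarrow> maps (Zd_op k) w w') \<Longrightarrow> maps (Zdf L f) w w'"
  by (auto simp: maps_def Zdf_def fun_eq_iff sum_distrib_left intro!: sum.cong)

lemma maps_of: "(\<And>k. k \<in> L \<Longrightarrow> maps (ann (Mo k)) w w') \<Longrightarrow> maps (of_op L g) w w'"
  by (auto simp: maps_def of_op_def fun_eq_iff sum_distrib_left intro!: sum.cong)

lemma maps_odf: "(\<And>k. k \<in> L \<Longrightarrow> maps (cre (Mo k)) w w') \<Longrightarrow> maps (odf_op L g) w w'"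
  by (auto simp: maps_def odf_op_def fun_eq_iff sum_distrib_left intro!: sum.cong)

lemma num_eq: "num m \<psi> n = of_nat (n m) * \<psi> n"
proof -
  have "complex_of_real (sqrt (real (n m))) * complex_of_real (sqrt (real (n m))) = of_nat (n m)"
    by (simp flip: of_real_mult)
  thus ?thesis by (simp add: num_def cre_def ann_def)
qed

lemma maps_H0: "maps (H0 L wa wc wp WA WC WO) w w"
  by (auto simp: maps_def H0_def num_eq fun_eq_iff algebra_simps sum_distrib_left intro!: sum.cong)

lemma maps_HI:
  assumes "maps (zd_op \<circ> Zf L f) w w" "maps (z_op \<circ> Zdf L f) w w"
    "maps (cre Mp \<circ> of_op L g) w w" "maps (ann Mp \<circ> odf_op L g) w w"
  shows "maps (HI L f g) w w"
  using assms by (auto simp: maps_def HI_def fun_eq_iff algebra_simps)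

lemma maps_Ham:
  assumes "maps (HI L f g) w w"
  shows "maps (Ham L f g lam wa wc wp WA WC WO) w w"
  using assms maps_H0[of L wa wc wp WA WC WO w]
  by (auto simp: maps_def Ham_def fun_eq_iff algebra_simps)

lemma comm_zero:
  assumes "maps A w w" "\<And>\<psi>. D \<psi> = (\<lambda>n. w n * \<psi> n)"
  shows "comm A D \<psi> = (\<lambda>_. 0)"
  using assms by (simp add: maps_def comm_def)

lemma sum_upd:
  fixes F :: "nat \<Rightarrow> mode"
  assumes "inj F" "finite L" "k \<in> L"
  shows "(\<Sum>j\<in>L. (of_nat ((n(F k := x)) (F j)) :: complex))
       = (\<Sum>j\<in>L. of_nat (n (F j))) - of_nat (n (F k)) + of_nat x"
proof -
  have "(\<Sum>j\<in>L. (of_nat ((n(F k := x)) (F j)) :: complex))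
     = of_nat x + (\<Sum>j\<in>L-{k}. of_nat ((n(F k := x)) (F j)))"
    using assms by (simp add: sum.remove)
  also have "(\<Sum>j\<in>L-{k}. (of_nat ((n(F k := x)) (F j)) :: complex)) = (\<Sum>j\<in>L-{k}. of_nat (n (F j)))"
    using assms(1) by (intro sum.cong) (auto simp: inj_eq)
  also have "(\<Sum>j\<in>L. (of_nat (n (F j)) :: complex)) = of_nat (n (F k)) + (\<Sum>j\<in>L-{k}. of_nat (n (F j)))"
    using assms by (simp add: sum.remove)
  ultimately show ?thesis by simp
qed

lemma sum_if:
  assumes "finite L" "k \<in> L"
  shows "(\<Sum>j\<in>L. (of_nat (if j = k then x else h j) :: complex))
       = (\<Sum>j\<in>L. of_nat (h j)) - of_nat (h k) + of_nat x"
proof -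
  have "(\<Sum>j\<in>L. (of_nat (if j = k then x else h j) :: complex))
     = of_nat x + (\<Sum>j\<in>L-{k}. of_nat (h j))"
    using assms by (simp add: sum.remove)
  moreover have "(\<Sum>j\<in>L. (of_nat (h j) :: complex)) = of_nat (h k) + (\<Sum>j\<in>L-{k}. of_nat (h j))"
    using assms by (simp add: sum.remove)
  ultimately show ?thesis by simp
qed

definition Nw :: "nat set \<Rightarrow> occ \<Rightarrow> complex" where
  "Nw L n = of_nat (n Ma) + (\<Sum>j\<in>L. of_nat (n (MA j)))"
definition Kw :: "nat set \<Rightarrow> occ \<Rightarrow> complex" where
  "Kw L n = of_nat (n Mc) + (\<Sum>j\<in>L. of_nat (n (MC j)))"
definition Gw :: "nat set \<Rightarrow> occ \<Rightarrow> complex" where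
  "Gw L n = of_nat (n Mp) + (\<Sum>j\<in>L. of_nat (n (Mo j)))"

lemma injs: "inj MA" "inj MC" "inj Mo" by (auto intro: injI)


lemma N_HI: assumes "finite L" shows "maps (HI L f g) (Nw L) (Nw L)"
proof (rule maps_HI)
  show "maps (zd_op \<circ> Zf L f) (Nw L) (Nw L)" unfolding zd_op_def
  proof (rule maps_comp[where wm="\<lambda>n. Nw L n + 1"], rule maps_comp[where wm="Nw L"])
    show "maps (powP_ann Mc) (Nw L) (Nw L)" by (rule maps_pann) (simp add: Nw_def)
    show "maps (cre Ma) (\<lambda>n. Nw L n + 1) (Nw L)" by (rule maps_cre) (simp add: Nw_def of_nat_diff)
    show "maps (Zf L f) (Nw L) (\<lambda>n. Nw L n + 1)" unfolding Z_op_def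
      by (rule maps_Zf[unfolded Z_op_def], rule maps_comp[where wm="Nw L"], rule maps_ann)
        (simp_all add: Nw_def sum_if assms, rule maps_pcre, simp add: Nw_def)
  qed
  show "maps (z_op \<circ> Zdf L f) (Nw L) (Nw L)" unfolding z_op_def
  proof (rule maps_comp[where wm="\<lambda>n. Nw L n - 1"], rule maps_comp[where wm="\<lambda>n. Nw L n - 1"])
    show "maps (ann Ma) (\<lambda>n. Nw L n - 1) (Nw L)" by (rule maps_ann) (simp add: Nw_def)
    show "maps (powP_cre Mc) (\<lambda>n. Nw L n - 1) (\<lambda>n. Nw L n - 1)" by (rule maps_pcre) (simp add: Nw_def)
    show "maps (Zdf L f) (Nw L) (\<lambda>n. Nw L n - 1)" unfolding Zd_op_def
      by (rule maps_Zdf[unfolded Zd_op_def], rule maps_comp[where wm="Nw L"], rule maps_cre)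
        (simp_all add: Nw_def sum_if assms of_nat_diff, rule maps_pann, simp add: Nw_def)
  qed
  show "maps (cre Mp \<circ> of_op L g) (Nw L) (Nw L)"
    by (rule maps_comp[where wm="Nw L"], rule maps_cre, simp add: Nw_def, rule maps_of, rule maps_ann, simp add: Nw_def)
  show "maps (ann Mp \<circ> odf_op L g) (Nw L) (Nw L)"
    by (rule maps_comp[where wm="Nw L"], rule maps_ann, simp add: Nw_def, rule maps_odf, rule maps_cre, simp add: Nw_def)
qed

lemma K_HI: assumes "finite L" shows "maps (HI L f g) (Kw L) (Kw L)"
proof (rule maps_HI)
  show "maps (zd_op \<circ> Zf L f) (Kw L) (Kw L)" unfolding zd_op_def
  proof (rule maps_comp[where wm="\<lambda>n. Kw L n - of_nat (n Mp)"], rule maps_comp[where wm="\<lambda>n. Kw L n - of_nat (n Mp)"])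
    show "maps (powP_ann Mc) (\<lambda>n. Kw L n - of_nat (n Mp)) (Kw L)" by (rule maps_pann) (simp add: Kw_def)
    show "maps (cre Ma) (\<lambda>n. Kw L n - of_nat (n Mp)) (\<lambda>n. Kw L n - of_nat (n Mp))" by (rule maps_cre) (simp add: Kw_def)
    show "maps (Zf L f) (Kw L) (\<lambda>n. Kw L n - of_nat (n Mp))" unfolding Z_op_def
      by (rule maps_Zf[unfolded Z_op_def], rule maps_comp[where wm="\<lambda>n. Kw L n - of_nat (n Mp)"], rule maps_ann)
        (simp_all add: Kw_def, rule maps_pcre, simp add: Kw_def sum_if assms of_nat_diff)
  qed
  show "maps (z_op \<circ> Zdf L f) (Kw L) (Kw L)" unfolding z_op_def
  proof (rule maps_comp[where wm="\<lambda>n. Kw L n + of_nat (n Mp)"], rule maps_comp[where wm="Kw L"])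
    show "maps (ann Ma) (Kw L) (Kw L)" by (rule maps_ann) (simp add: Kw_def)
    show "maps (powP_cre Mc) (\<lambda>n. Kw L n + of_nat (n Mp)) (Kw L)" by (rule maps_pcre) (simp add: Kw_def of_nat_diff)
    show "maps (Zdf L f) (Kw L) (\<lambda>n. Kw L n + of_nat (n Mp))" unfolding Zd_op_def
      by (rule maps_Zdf[unfolded Zd_op_def], rule maps_comp[where wm="\<lambda>n. Kw L n + of_nat (n Mp)"], rule maps_cre)
        (simp_all add: Kw_def, rule maps_pann, simp add: Kw_def sum_if assms)
  qed
  show "maps (cre Mp \<circ> of_op L g) (Kw L) (Kw L)"
    by (rule maps_comp[where wm="Kw L"], rule maps_cre, simp add: Kw_def, rule maps_of, rule maps_ann, simp add: Kw_def)
  show "maps (ann Mp \<circ> odf_op L g) (Kw L) (Kw L)"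
    by (rule maps_comp[where wm="Kw L"], rule maps_ann, simp add: Kw_def, rule maps_odf, rule maps_cre, simp add: Kw_def)
qed

lemma G_HI: assumes "finite L" shows "maps (HI L f g) (Gw L) (Gw L)"
proof (rule maps_HI)
  show "maps (zd_op \<circ> Zf L f) (Gw L) (Gw L)" unfolding zd_op_def Zf_def[abs_def]
    by (rule maps_comp[where wm="Gw L"], rule maps_comp[where wm="Gw L"], rule maps_pann, simp add: Gw_def,
        rule maps_cre, simp add: Gw_def, rule maps_Zf[unfolded Zf_def[abs_def]], unfold Z_op_def,
        rule maps_comp[where wm="Gw L"], rule maps_ann, simp add: Gw_def, rule maps_pcre, simp add: Gw_def)
  show "maps (z_op \<circ> Zdf L f) (Gw L) (Gw L)" unfolding z_op_def Zdf_def[abs_def]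
    by (rule maps_comp[where wm="Gw L"], rule maps_comp[where wm="Gw L"], rule maps_ann, simp add: Gw_def,
        rule maps_pcre, simp add: Gw_def, rule maps_Zdf[unfolded Zdf_def[abs_def]], unfold Zd_op_def,
        rule maps_comp[where wm="Gw L"], rule maps_cre, simp add: Gw_def, rule maps_pann, simp add: Gw_def)
  show "maps (cre Mp \<circ> of_op L g) (Gw L) (Gw L)"
    by (rule maps_comp[where wm="\<lambda>n. Gw L n + 1"], rule maps_cre, simp add: Gw_def of_nat_diff,
        rule maps_of, rule maps_ann, simp add: Gw_def sum_if assms)
  show "maps (ann Mp \<circ> odf_op L g) (Gw L) (Gw L)"
    by (rule maps_comp[where wm="\<lambda>n. Gw L n - 1"], rule maps_ann, simp add: Gw_def,
        rule maps_odf, rule maps_cre, simp add: Gw_def sum_if assms of_nat_diff)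
qed

theorem proposition1:
  fixes L :: "nat set" and f g :: "nat \<Rightarrow> complex"
    and lam wa wc wp :: real and WA WC WO :: "nat \<Rightarrow> real" and \<psi> :: vec
  assumes "finite L"
    and "lam > 0" and "wa > 0" and "wc > 0" and "wp > 0"
    and "\<And>k. WA k \<ge> 0" and "\<And>k. WC k \<ge> 0" and "\<And>k. WO k \<ge> 0"
    and "fin_comb L \<psi>"
  shows "comm (Ham L f g lam wa wc wp WA WC WO) (Ntot L) \<psi> = (\<lambda>_. 0)
       \<and> comm (Ham L f g lam wa wc wp WA WC WO) (Ktot L) \<psi> = (\<lambda>_. 0)
       \<and> comm (Ham L f g lam wa wc wp WA WC WO) (Gtot L) \<psi> = (\<lambda>_. 0)"
proof (intro conjI)
  show "comm (Ham L f g lam wa wc wp WA WC WO) (Ntot L) \<psi> = (\<lambda>_. 0)"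
    by (rule comm_zero[OF maps_Ham[OF N_HI[OF assms(1)]]])
       (simp add: Ntot_def Nw_def num_eq fun_eq_iff algebra_simps sum_distrib_left)
  show "comm (Ham L f g lam wa wc wp WA WC WO) (Ktot L) \<psi> = (\<lambda>_. 0)"
    by (rule comm_zero[OF maps_Ham[OF K_HI[OF assms(1)]]])
       (simp add: Ktot_def Kw_def num_eq fun_eq_iff algebra_simps sum_distrib_left)
  show "comm (Ham L f g lam wa wc wp WA WC WO) (Gtot L) \<psi> = (\<lambda>_. 0)"
    by (rule comm_zero[OF maps_Ham[OF G_HI[OF assms(1)]]])
       (simp add: Gtot_def Gw_def num_eq fun_eq_iff algebra_simps sum_distrib_left)
qed

end
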